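(* Let $\Omega\subset\mathbb{R}^N$ be a bounded open set and let $p,q:\Omega\to[1,\infty)$ be measurable with $q(x)\le p(x)\le p_+<\infty$ for all $x\in\Omega$. Let $K\subset\Omega$ be compact and suppose $\varphi(t)=|\{x\in\Omega:d_K(x)<t\}|\le Ct^\sigma$ for all $t>0$, for some $C>0$ and $\sigma\in(0,N]$. Let $\psi:(1,\infty)\to(0,\infty)$ be such that $\psi(t)/\ln t$ is decreasing and $\lim_{t\to\infty}\psi(t)=\infty$, and assume that for a.e. $x\in\Omega$ we have $0<d_K(x)<1$ and $$\frac{1}{p(x)-q(x)}\le\frac{\ln(1/d_K(x))}{\psi(1/d_K(x))}.$$ Then $L^{p(\cdot)}(\Omega)$ is almost-compactly embedded in $L^{q(\cdot)}(\Omega)$.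
   Context: $d_K(x)=\operatorname{dist}(x,K)$; $\frac1{p(x)-q(x)}=+\infty$ where $p(x)=q(x)$. For measurable $e:\Omega\to[1,\infty)$, $\|u\|_{e(\cdot)}=\inf\{\lambda>0:\int_\Omega|u(x)/\lambda|^{e(x)}dx\le1\}$ and $L^{e(\cdot)}(\Omega)$ is the set of measurable $u$ with finite norm. Almost-compact embedding: for Banach function spaces $X,Y$ on $\Omega$, $X$ is almost-compactly embedded in $Y$ if for every sequence $\{E_n\}$ of measurable subsets of $\Omega$ with $\chi_{E_n}\to0$ pointwise a.e. one has $\lim_{n\to\infty}\sup_{\|u\|_X\le1}\|u\chi_{E_n}\|_Y=0$. *)

theory Defs
  imports "HOL-Analysis.Analysis"
begin

text \<open>Luxemburg norm of the variable exponent Lebesgue space on Omega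
  (value in ennreal; Inf of the empty set is infinity).\<close>
definition vnorm :: "('a::euclidean_space \<Rightarrow> real) \<Rightarrow> 'a set \<Rightarrow> ('a \<Rightarrow> real) \<Rightarrow> ennreal" where
  "vnorm e \<Omega> u = (INF l\<in>{l::real. l > 0 \<and>
      (\<integral>\<^sup>+ x. ennreal (\<bar>u x / l\<bar> powr e x) \<partial>lebesgue_on \<Omega>) \<le> 1}. ennreal l)"

definition Lvar :: "('a::euclidean_space \<Rightarrow> real) \<Rightarrow> 'a set \<Rightarrow> ('a \<Rightarrow> real) set" where
  "Lvar e \<Omega> = {u. u \<in> borel_measurable (lebesgue_on \<Omega>) \<and> vnorm e \<Omega> u < \<infinity>}"

definition almost_compact_emb :: "('a::euclidean_space \<Rightarrow> real) \<Rightarrow> ('a \<Rightarrow> real) \<Rightarrow> 'a set \<Rightarrow> bool" where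
  "almost_compact_emb p q \<Omega> \<longleftrightarrow>
    (\<forall>E :: nat \<Rightarrow> 'a set.
       (\<forall>n. E n \<in> sets lebesgue \<and> E n \<subseteq> \<Omega>) \<and>
       (AE x in lebesgue_on \<Omega>. (\<lambda>n. indicator (E n) x :: real) \<longlonglongrightarrow> 0) \<longrightarrow>
       ((\<lambda>n. SUP u\<in>{u\<in>Lvar p \<Omega>. vnorm p \<Omega> u \<le> 1}.
              vnorm q \<Omega> (\<lambda>x. u x * indicator (E n) x)) \<longlonglongrightarrow> 0))"

end

theory Submission
  imports Defs
begin



lemma geom_term:
  fixes s \<sigma> :: real and k :: nat
  shows "2 powr ((real k + 1) * s) * (C * (2 * (1/2)^k) powr \<sigma>) = C * 2 powr (s + \<sigma>) * (2 powr (s - \<sigma>))^k"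
proof -
  have a: "(2::real) * (1/2)^k = 2 powr (1 - real k)"
    by (simp add: powr_diff powr_realpow power_one_over field_simps)
  have "2 powr ((real k + 1) * s) * (C * (2 * (1/2)^k) powr \<sigma>) = C * 2 powr ((real k + 1) * s + (1 - real k) * \<sigma>)"
    unfolding a by (simp add: powr_powr powr_add)
  also have "(real k + 1) * s + (1 - real k) * \<sigma> = (s + \<sigma>) + real k * (s - \<sigma>)" by (simp add: algebra_simps)
  also have "C * 2 powr ((s + \<sigma>) + real k * (s - \<sigma>)) = C * 2 powr (s + \<sigma>) * (2 powr (s - \<sigma>))^k"
    by (simp add: powr_add powr_realpow[symmetric] powr_powr mult.commute)
  finally show ?thesis .
qed



lemma pw_bound:
  fixes d s :: real
  assumes "0 < d" "0 < s"
  shows "ennreal (d powr (-s)) \<le> 1 + (\<Sum>k. ennreal (2 powr ((real k + 1) * s)) * indicator {y::real. y < 2 * (1/2)^k} d)"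
    (is "_ \<le> 1 + ?S")
proof (cases "d \<ge> 1")
  case True
  have "1 \<le> d powr s" using True assms by (intro ge_one_powr_ge_zero) auto
  then have "d powr (-s) \<le> 1" by (simp add: powr_minus inverse_le_1_iff)
  then have "ennreal (d powr (-s)) \<le> 1" by (simp add: ennreal_le_1)
  also have "(1::ennreal) \<le> 1 + ?S" by (rule add_increasing2) auto
  finally show ?thesis .
next
  case False
  have ex: "\<exists>n. (1/2::real)^n < d" using real_arch_pow_inv[of d "1/2"] assms by auto
  define n where "n = (LEAST n. (1/2::real)^n < d)"
  have n1: "(1/2::real)^n < d" unfolding n_def using ex by (rule LeastI_ex)
  have "n \<noteq> 0" proof assume "n = 0" then show False using n1 False by simp qed
  then obtain m where m: "n = Suc m" by (cases n) auto
  have m2: "\<not> (1/2::real)^m < d" using not_less_Least[of m "\<lambda>n. (1/2::real)^n < d"] m n_def by auto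
  have "d powr (-s) \<le> ((1/2)^(Suc m)) powr (-s)"
    using n1 m assms by (intro powr_mono2') auto
  also have "((1/2::real)^(Suc m)) powr (-s) = 2 powr ((real m + 1) * s)"
  proof -
    have h: "2 powr (real (Suc m)) = (2::real)^(Suc m)" by (rule powr_realpow) simp
    have "((1/2::real)^(Suc m)) = 2 powr (- (real m + 1))"
      unfolding powr_minus using h by (simp add: power_one_over inverse_eq_divide add.commute)
    then have e1: "((1/2::real)^(Suc m)) powr (-s) = (2 powr (- (real m + 1))) powr (-s)" by (simp only:)
    have e2: "- (real m + 1) * - s = (real m + 1) * s" by (simp add: algebra_simps)
    show ?thesis unfolding e1 powr_powr e2 by (rule refl)
  qed
  finally have A0: "d powr (-s) \<le> 2 powr ((real m + 1) * s)" .
  have ind: "indicator {y::real. y < 2 * (1/2)^m} d = (1::ennreal)"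
  proof -
    have pos: "(0::real) < (1/2)^m" by simp
    have "d < 2 * (1/2)^m" using m2 pos by linarith
    then show ?thesis by (simp add: indicator_def)
  qed
  have "ennreal (d powr (-s)) \<le> ennreal (2 powr ((real m + 1) * s)) * indicator {y::real. y < 2 * (1/2)^m} d"
    unfolding ind using A0 by (simp add: ennreal_leI)
  also have "\<dots> \<le> ?S"
  proof -
    have "(\<Sum>k\<in>{m}. ennreal (2 powr ((real k + 1) * s)) * indicator {y::real. y < 2 * (1/2)^k} d) \<le> ?S"
      by (rule sum_le_suminf) (auto intro: summableI)
    then show ?thesis by (simp only: sum.insert[OF finite.emptyI] empty_iff not_False_eq_True sum.empty add_0_right)
  qed
  also have "?S \<le> 1 + ?S" by (rule add_increasing) auto
  finally show ?thesis .
qed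

lemma infdist_set_lebesgue:
  fixes \<Omega> K :: "'a::euclidean_space set"
  assumes "\<Omega> \<in> sets lebesgue"
  shows "{x\<in>\<Omega>. infdist x K < t} \<in> sets lebesgue"
proof -
  have "open {x. infdist x K < t}"
    by (intro open_Collect_less continuous_intros)
  then have "{x. infdist x K < t} \<in> sets lebesgue" by simp
  moreover have "{x\<in>\<Omega>. infdist x K < t} = \<Omega> \<inter> {x. infdist x K < t}" by auto
  ultimately show ?thesis using assms by auto
qed

lemma dist_int:
  fixes \<Omega> K :: "'a::euclidean_space set"
  assumes Om: "\<Omega> \<in> sets lebesgue" "emeasure lebesgue \<Omega> < \<infinity>"
    and phi: "\<forall>t>0. emeasure lebesgue {x\<in>\<Omega>. infdist x K < t} \<le> ennreal (C * t powr \<sigma>)"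
    and s: "0 < s" "s < \<sigma>" and C: "C > 0"
  shows "(\<integral>\<^sup>+ x. ennreal (infdist x K powr (-s)) \<partial>lebesgue_on \<Omega>) < \<infinity>"
proof -
  define A where "A k = {x\<in>\<Omega>. infdist x K < 2 * (1/2::real)^k}" for k :: nat
  define w where "w k = ennreal (2 powr ((real k + 1) * s))" for k :: nat
  have Asets: "A k \<in> sets (lebesgue_on \<Omega>)" for k
    unfolding A_def using infdist_set_lebesgue[OF Om(1)] by (auto simp: sets_restrict_space_iff Om(1))
  have "(\<integral>\<^sup>+ x. ennreal (infdist x K powr (-s)) \<partial>lebesgue_on \<Omega>)
      \<le> (\<integral>\<^sup>+ x. 1 + (\<Sum>k. w k * indicator (A k) x) \<partial>lebesgue_on \<Omega>)"
  proof (rule nn_integral_mono)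
    fix x assume x: "x \<in> space (lebesgue_on \<Omega>)"
    then have xO: "x \<in> \<Omega>" by simp
    show "ennreal (infdist x K powr (-s)) \<le> 1 + (\<Sum>k. w k * indicator (A k) x)"
    proof (cases "infdist x K = 0")
      case True then show ?thesis by simp
    next
      case False
      then have "infdist x K > 0" using infdist_nonneg[of x K] by linarith
      from pw_bound[OF this s(1)] show ?thesis
        using xO by (simp add: w_def A_def indicator_def)
    qed
  qed
  also have "\<dots> = (\<integral>\<^sup>+ x. 1 \<partial>lebesgue_on \<Omega>) + (\<integral>\<^sup>+ x. (\<Sum>k. w k * indicator (A k) x) \<partial>lebesgue_on \<Omega>)"
    by (rule nn_integral_add) (use Asets in auto)
  finally have I1: "(\<integral>\<^sup>+ x. ennreal (infdist x K powr (-s)) \<partial>lebesgue_on \<Omega>) \<le> (\<integral>\<^sup>+ x. 1 \<partial>lebesgue_on \<Omega>) + (\<integral>\<^sup>+ x. (\<Sum>k. w k * indicator (A k) x) \<partial>lebesgue_on \<Omega>)" .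
  have "(\<integral>\<^sup>+ x. (\<Sum>k. w k * indicator (A k) x) \<partial>lebesgue_on \<Omega>) = (\<Sum>k. \<integral>\<^sup>+ x. w k * indicator (A k) x \<partial>lebesgue_on \<Omega>)"
    by (rule nn_integral_suminf) (use Asets in auto)
  also have "\<dots> = (\<Sum>k. w k * emeasure lebesgue (A k))"
  proof (rule suminf_cong)
    fix k
    have "(\<integral>\<^sup>+ x. w k * indicator (A k) x \<partial>lebesgue_on \<Omega>) = w k * emeasure (lebesgue_on \<Omega>) (A k)"
      using Asets by (simp add: nn_integral_cmult_indicator)
    also have "emeasure (lebesgue_on \<Omega>) (A k) = emeasure lebesgue (A k)"
      by (rule emeasure_restrict_space) (auto simp: A_def Om(1))
    finally show "(\<integral>\<^sup>+ x. w k * indicator (A k) x \<partial>lebesgue_on \<Omega>) = w k * emeasure lebesgue (A k)" .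
  qed
  also have "\<dots> \<le> (\<Sum>k. ennreal (C * 2 powr (s + \<sigma>) * (2 powr (s - \<sigma>))^k))"
  proof (rule suminf_le)
    fix k
    have "w k * emeasure lebesgue (A k) \<le> w k * ennreal (C * (2 * (1/2::real)^k) powr \<sigma>)"
      unfolding A_def by (intro mult_left_mono phi[rule_format]) auto
    also have "\<dots> = ennreal (2 powr ((real k + 1) * s) * (C * (2 * (1/2)^k) powr \<sigma>))"
      unfolding w_def by (subst ennreal_mult) (use C in auto)
    also have "\<dots> = ennreal (C * 2 powr (s + \<sigma>) * (2 powr (s - \<sigma>))^k)"
      by (simp only: geom_term)
    finally show "w k * emeasure lebesgue (A k) \<le> ennreal (C * 2 powr (s + \<sigma>) * (2 powr (s - \<sigma>))^k)" .
  qed auto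
  also have "\<dots> = ennreal (\<Sum>k. C * 2 powr (s + \<sigma>) * (2 powr (s - \<sigma>))^k)"
  proof (rule suminf_ennreal2)
    show "summable (\<lambda>k. C * 2 powr (s + \<sigma>) * (2 powr (s - \<sigma>))^k)"
    proof (intro summable_mult summable_geometric)
      have "2 powr (s - \<sigma>) < 2 powr 0" using s by (intro powr_less_mono) auto
      then have h: "2 powr (s - \<sigma>) < (1::real)" by simp
      have h0: "0 < (2::real) powr (s - \<sigma>)" by simp
      show "norm (2 powr (s - \<sigma>)) < (1::real)" by (simp only: real_norm_def abs_of_pos[OF h0] h)
    qed
  qed (use C in simp)
  finally have I3: "(\<integral>\<^sup>+ x. (\<Sum>k. w k * indicator (A k) x) \<partial>lebesgue_on \<Omega>) \<le> ennreal (\<Sum>k. C * 2 powr (s + \<sigma>) * (2 powr (s - \<sigma>))^k)" .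
  have J1: "(\<integral>\<^sup>+ x. ennreal (infdist x K powr (-s)) \<partial>lebesgue_on \<Omega>)
      \<le> (\<integral>\<^sup>+ x. 1 \<partial>lebesgue_on \<Omega>) + ennreal (\<Sum>k. C * 2 powr (s + \<sigma>) * (2 powr (s - \<sigma>))^k)"
    by (rule order_trans[OF I1 add_left_mono[OF I3]])
  have "(\<integral>\<^sup>+ x. 1 \<partial>lebesgue_on \<Omega>) = 1 * emeasure (lebesgue_on \<Omega>) (space (lebesgue_on \<Omega>))"
    by (rule nn_integral_const)
  also have "\<dots> = emeasure lebesgue \<Omega>"
    by (simp only: mult_1 space_lebesgue_on, rule emeasure_restrict_space) (use Om in auto)
  finally have E: "(\<integral>\<^sup>+ x. 1 \<partial>lebesgue_on \<Omega>) = emeasure lebesgue \<Omega>" .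
  have J2: "(\<integral>\<^sup>+ x. 1 \<partial>lebesgue_on \<Omega>) < \<infinity>" unfolding E by (rule Om(2))
  have J3: "(\<integral>\<^sup>+ x. 1 \<partial>lebesgue_on \<Omega>) + ennreal (\<Sum>k. C * 2 powr (s + \<sigma>) * (2 powr (s - \<sigma>))^k) < \<infinity>"
    using J2 unfolding infinity_ennreal_def ennreal_add_less_top by (intro conjI) (assumption, rule ennreal_less_top)
  show ?thesis
    by (rule order.strict_trans1[OF J1 J3])
qed



lemma core_ineq:
  fixes p q P \<mu> \<eta> g :: real
  assumes q1: "1 \<le> q" and qp: "q < p" and pP: "p \<le> P" and mu: "1 \<le> \<mu>"
    and eta: "0 < \<eta>" "\<eta> < 1" and g: "0 \<le> g"
  shows "(\<mu> * g) powr q \<le> \<mu> powr P * exp (ln (1/\<eta>) / (p - q)) powr P + \<mu> powr P * \<eta> * g powr p"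
proof -
  define H where "H = exp (ln (1/\<eta>) / (p - q))"
  have lnpos: "0 < ln (1/\<eta>)" using eta by simp
  have H1: "1 \<le> H" unfolding H_def using lnpos qp by (simp add: zero_le_divide_iff)
  have Hpos: "0 < H" using H1 by simp
  have nn1: "0 \<le> \<mu> powr P * \<eta> * g powr p" using eta by simp
  have nn2: "0 \<le> \<mu> powr P * H powr P" by simp
  have "(\<mu> * g) powr q \<le> \<mu> powr P * H powr P + \<mu> powr P * \<eta> * g powr p"
  proof (cases "g \<le> H")
    case True
    have "(\<mu> * g) powr q \<le> (\<mu> * H) powr q"
      using True mu g q1 by (intro powr_mono2) auto
    also have "\<dots> \<le> (\<mu> * H) powr P"
    proof (rule powr_mono)
      show "1 \<le> \<mu> * H" using mu H1 by (metis mult_mono one_le_numeral order.trans mult_1 zero_le_one)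
    qed (use qp pP in auto)
    also have "\<dots> = \<mu> powr P * H powr P"
      using mu Hpos by (simp add: powr_mult)
    finally show ?thesis using nn1 by linarith
  next
    case False
    then have gH: "H < g" by simp
    then have gpos: "0 < g" using Hpos by linarith
    have a1: "(\<mu> * g) powr q = \<mu> powr q * g powr q" using mu gpos by (simp add: powr_mult)
    have a2: "\<mu> powr q \<le> \<mu> powr P" using mu q1 qp pP by (intro powr_mono) auto
    have a3: "g powr q = g powr p * g powr (q - p)"
      using gpos by (simp add: powr_add[symmetric])
    have a4: "g powr (q - p) \<le> H powr (q - p)"
      using gH Hpos qp by (intro powr_mono2') auto
    have a5: "H powr (q - p) = \<eta>"
    proof -
      have "H powr (q - p) = exp ((q - p) * (ln (1/\<eta>) / (p - q)))"
        unfolding H_def powr_def using qp by simp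
      also have "(q - p) * (ln (1/\<eta>) / (p - q)) = - ln (1/\<eta>)" using qp by (simp add: field_simps)
      also have "exp (- ln (1/\<eta>)) = \<eta>" using eta by (simp add: exp_minus ln_div)
      finally show ?thesis .
    qed
    have a6: "g powr q \<le> \<eta> * g powr p"
      using a3 a4 a5 mult_left_mono[OF a4, of "g powr p"] by (simp add: mult.commute)
    have "(\<mu> * g) powr q \<le> \<mu> powr P * g powr q"
      unfolding a1 by (rule mult_right_mono[OF a2]) simp
    also have "\<dots> \<le> \<mu> powr P * (\<eta> * g powr p)"
      by (rule mult_left_mono[OF a6]) simp
    finally have "(\<mu> * g) powr q \<le> \<mu> powr P * \<eta> * g powr p" by (simp add: mult.assoc)
    then show ?thesis using nn2 by linarith
  qed
  then show ?thesis unfolding H_def .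
qed



lemma F_bound:
  fixes d p q \<Lambda> \<sigma> T :: real and \<psi> :: "real \<Rightarrow> real"
  assumes d: "0 < d" "d < 1" and qp: "q < p"
    and hyp: "1 / (p - q) \<le> ln (1 / d) / \<psi> (1 / d)"
    and L: "0 < \<Lambda>" and sig: "0 < \<sigma>" and T: "1 < T"
    and Tbig: "\<forall>t\<ge>T. 2 * \<Lambda> / \<sigma> \<le> \<psi> t"
    and psipos: "\<forall>t>1. \<psi> t > 0"
    and dec: "\<forall>s t. 1 < s \<and> s \<le> t \<longrightarrow> \<psi> t / ln t \<le> \<psi> s / ln s"
  shows "exp (\<Lambda> / (p - q)) \<le> exp (\<Lambda> / (\<psi> T / ln T)) + d powr (-(\<sigma>/2))"
proof -
  define t where "t = 1 / d"
  have t1: "1 < t" unfolding t_def using d by simp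
  have lnt: "0 < ln t" using t1 by simp
  have pt: "0 < \<psi> t" using psipos t1 by simp
  have "\<Lambda> / (p - q) = \<Lambda> * (1 / (p - q))" by simp
  also have "\<dots> \<le> \<Lambda> * (ln t / \<psi> t)" using hyp L unfolding t_def by (intro mult_left_mono) auto
  finally have A: "\<Lambda> / (p - q) \<le> \<Lambda> * (ln t / \<psi> t)" .
  have e1: "0 < exp (\<Lambda> / (\<psi> T / ln T))" by simp
  have e2: "0 \<le> d powr (-(\<sigma>/2))" by simp
  show ?thesis
  proof (cases "T \<le> t")
    case True
    have ps: "2 * \<Lambda> / \<sigma> \<le> \<psi> t" using Tbig True by simp
    have "\<Lambda> / \<psi> t \<le> \<sigma> / 2"
      using ps sig pt L by (simp add: field_simps)
    then have B: "\<Lambda> * (ln t / \<psi> t) \<le> (\<sigma>/2) * ln t"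
      using lnt by (metis mult.commute mult_right_mono less_imp_le times_divide_eq_right times_divide_eq_left)
    have "\<Lambda> / (p - q) \<le> (\<sigma>/2) * ln t" using A B by (rule order_trans)
    then have "exp (\<Lambda> / (p - q)) \<le> exp ((\<sigma>/2) * ln t)" by (rule exp_mono)
    also have "exp ((\<sigma>/2) * ln t) = d powr (-(\<sigma>/2))"
      unfolding t_def powr_def using d by (simp add: ln_div)
    finally show ?thesis using e1 by linarith
  next
    case False
    have "\<psi> T / ln T \<le> \<psi> t / ln t" using dec t1 False by simp
    moreover have c: "0 < \<psi> T / ln T" using psipos T by simp
    ultimately have c2: "0 < \<psi> t / ln t" by linarith
    have "\<Lambda> / (\<psi> t / ln t) \<le> \<Lambda> / (\<psi> T / ln T)"
      by (rule divide_left_mono[OF _ _ mult_pos_pos[OF c2 c]]) (use L \<open>\<psi> T / ln T \<le> \<psi> t / ln t\<close> in auto)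
    moreover have "\<Lambda> * (ln t / \<psi> t) = \<Lambda> / (\<psi> t / ln t)" by simp
    ultimately have "\<Lambda> / (p - q) \<le> \<Lambda> / (\<psi> T / ln T)" using A by linarith
    then have "exp (\<Lambda> / (p - q)) \<le> exp (\<Lambda> / (\<psi> T / ln T))" by simp
    then show ?thesis using e2 by linarith
  qed
qed



lemma ennreal_tendsto0I:
  fixes f :: "'b \<Rightarrow> ennreal"
  assumes "\<And>\<epsilon>. 0 < \<epsilon> \<Longrightarrow> \<epsilon> < 1 \<Longrightarrow> eventually (\<lambda>n. f n \<le> ennreal \<epsilon>) F"
  shows "(f \<longlongrightarrow> 0) F"
proof (rule order_tendstoI)
  fix a :: ennreal assume "a < 0" then show "eventually (\<lambda>n. a < f n) F" by simp
next
  fix a :: ennreal assume a: "0 < a"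
  obtain \<epsilon> where e: "0 < \<epsilon>" "\<epsilon> < 1" "ennreal \<epsilon> < a"
  proof (cases a)
    case (real r)
    then have r: "0 < r" using a by simp
    show ?thesis
      by (rule that[of "min (1/2) (r/2)"]) (use r real in \<open>auto intro!: ennreal_lessI\<close>)
  next
    case top
    show ?thesis
    proof (rule that[of "1/2"])
      show "ennreal (1/2) < a" unfolding top by (rule ennreal_less_top)
    qed simp_all
  qed
  show "eventually (\<lambda>n. f n < a) F"
    using assms[OF e(1,2)] by (rule eventually_mono) (rule order.strict_trans1[OF _ e(3)])
qed

lemma modular_half:
  fixes \<Omega> :: "'a::euclidean_space set"
  assumes "vnorm p \<Omega> u \<le> 1" and pos: "\<forall>x\<in>\<Omega>. 0 \<le> p x"
  shows "(\<integral>\<^sup>+ x. ennreal (\<bar>u x / 2\<bar> powr p x) \<partial>lebesgue_on \<Omega>) \<le> 1"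
proof -
  have "(INF l\<in>{l::real. l > 0 \<and> (\<integral>\<^sup>+ x. ennreal (\<bar>u x / l\<bar> powr p x) \<partial>lebesgue_on \<Omega>) \<le> 1}. ennreal l) < 2"
    using assms(1) unfolding vnorm_def by (rule le_less_trans) simp
  then obtain l where l: "l > 0" "(\<integral>\<^sup>+ x. ennreal (\<bar>u x / l\<bar> powr p x) \<partial>lebesgue_on \<Omega>) \<le> 1" "ennreal l < 2"
    by (auto simp: INF_less_iff)
  have l2: "l < 2" using l(3) l(1) by (metis ennreal_less_iff ennreal_numeral less_le zero_le_numeral)
  have "(\<integral>\<^sup>+ x. ennreal (\<bar>u x / 2\<bar> powr p x) \<partial>lebesgue_on \<Omega>) \<le> (\<integral>\<^sup>+ x. ennreal (\<bar>u x / l\<bar> powr p x) \<partial>lebesgue_on \<Omega>)"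
  proof (rule nn_integral_mono)
    fix x assume "x \<in> space (lebesgue_on \<Omega>)"
    then have x: "x \<in> \<Omega>" by simp
    have "\<bar>u x\<bar> / 2 \<le> \<bar>u x\<bar> / l" by (rule divide_left_mono) (use l(1) l2 in auto)
    then have "\<bar>u x / 2\<bar> \<le> \<bar>u x / l\<bar>" using l(1) by (simp add: abs_divide)
    then show "ennreal (\<bar>u x / 2\<bar> powr p x) \<le> ennreal (\<bar>u x / l\<bar> powr p x)"
      using pos x by (intro ennreal_leI powr_mono2) auto
  qed
  then show ?thesis using l(2) by (rule order_trans)
qed


theorem mainTheorem11:
  fixes \<Omega> K :: "'a::euclidean_space set"
    and p q :: "'a \<Rightarrow> real" and p_plus C \<sigma> :: real
    and \<psi> :: "real \<Rightarrow> real"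
  assumes "bounded \<Omega>" "open \<Omega>"
    and "p \<in> borel_measurable (lebesgue_on \<Omega>)" "q \<in> borel_measurable (lebesgue_on \<Omega>)"
    and "\<forall>x\<in>\<Omega>. 1 \<le> q x \<and> q x \<le> p x \<and> p x \<le> p_plus"
    and "compact K" "K \<subseteq> \<Omega>"
    and "C > 0" "\<sigma> > 0" "\<sigma> \<le> real DIM('a)"
    and "\<forall>t>0. emeasure lebesgue {x\<in>\<Omega>. infdist x K < t} \<le> ennreal (C * t powr \<sigma>)"
    and "\<forall>t>1. \<psi> t > 0"
    and "\<forall>s t. 1 < s \<and> s \<le> t \<longrightarrow> \<psi> t / ln t \<le> \<psi> s / ln s"
    and "filterlim \<psi> at_top at_top"
    and "AE x in lebesgue_on \<Omega>. 0 < infdist x K \<and> infdist x K < 1 \<and> p x \<noteq> q x \<and>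
           1 / (p x - q x) \<le> ln (1 / infdist x K) / \<psi> (1 / infdist x K)"
  shows "almost_compact_emb p q \<Omega>"
proof -
  note pm[measurable] = assms(3) and qm[measurable] = assms(4)
  define P where "P = max p_plus 1"
  have P1: "1 \<le> P" unfolding P_def by simp
  have bnds: "\<And>x. x \<in> \<Omega> \<Longrightarrow> 1 \<le> q x \<and> q x \<le> p x \<and> p x \<le> P"
    using assms(5) unfolding P_def by fastforce
  have Olm: "\<Omega> \<in> lmeasurable" using assms(1,2) by (rule lmeasurable_open)
  then have Osets: "\<Omega> \<in> sets lebesgue" and Ofin: "emeasure lebesgue \<Omega> < \<infinity>"
    by (auto simp: fmeasurable_def)
  have good: "AE x in lebesgue_on \<Omega>. x \<in> \<Omega> \<and> 0 < infdist x K \<and> infdist x K < 1 \<and> q x < p x \<and>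
           1 / (p x - q x) \<le> ln (1 / infdist x K) / \<psi> (1 / infdist x K) \<and>
           1 \<le> q x \<and> p x \<le> P"
    using assms(15)
  proof (rule AE_mp[OF _ AE_I2])
    fix x assume "x \<in> space (lebesgue_on \<Omega>)"
    then have x: "x \<in> \<Omega>" by simp
    show "0 < infdist x K \<and> infdist x K < 1 \<and> p x \<noteq> q x \<and>
           1 / (p x - q x) \<le> ln (1 / infdist x K) / \<psi> (1 / infdist x K) \<longrightarrow>
          x \<in> \<Omega> \<and> 0 < infdist x K \<and> infdist x K < 1 \<and> q x < p x \<and>
           1 / (p x - q x) \<le> ln (1 / infdist x K) / \<psi> (1 / infdist x K) \<and>
           1 \<le> q x \<and> p x \<le> P"
      using bnds[OF x] x by auto
  qed
  have dmeas[measurable]: "(\<lambda>x. infdist x K) \<in> borel_measurable (lebesgue_on \<Omega>)"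
    by (rule continuous_imp_measurable_on_sets_lebesgue[OF _ Osets]) (intro continuous_intros)
  show ?thesis unfolding almost_compact_emb_def
  proof (intro allI impI)
    fix E :: "nat \<Rightarrow> 'a set"
    assume hE: "(\<forall>n. E n \<in> sets lebesgue \<and> E n \<subseteq> \<Omega>) \<and>
       (AE x in lebesgue_on \<Omega>. (\<lambda>n. indicator (E n) x :: real) \<longlonglongrightarrow> 0)"
    have Esets[measurable]: "E n \<in> sets (lebesgue_on \<Omega>)" for n
      using hE Osets by (auto simp: sets_restrict_space_iff)
    show "(\<lambda>n. SUP u\<in>{u\<in>Lvar p \<Omega>. vnorm p \<Omega> u \<le> 1}.
              vnorm q \<Omega> (\<lambda>x. u x * indicator (E n) x)) \<longlonglongrightarrow> 0"
    proof (rule ennreal_tendsto0I)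
      fix \<epsilon> :: real assume e: "0 < \<epsilon>" "\<epsilon> < 1"
      define \<mu> where "\<mu> = 2 / \<epsilon>"
      have mu1: "1 \<le> \<mu>" unfolding \<mu>_def using e by simp
      define \<eta> where "\<eta> = 1 / (2 * \<mu> powr P)"
      have muP: "1 \<le> \<mu> powr P" using mu1 P1 by (intro ge_one_powr_ge_zero) auto
      have mu2: "1 < 2 * \<mu> powr P" using muP by linarith
      have eta: "0 < \<eta>" "\<eta> < 1" unfolding \<eta>_def using muP mu2 by (auto simp: divide_less_eq)
      define \<Lambda> where "\<Lambda> = P * ln (1 / \<eta>)"
      have L: "0 < \<Lambda>" unfolding \<Lambda>_def using P1 eta by simp
      define F where "F x = exp (\<Lambda> / (p x - q x))" for x
      have Fm[measurable]: "F \<in> borel_measurable (lebesgue_on \<Omega>)" unfolding F_def by measurable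
      have FH: "exp (ln (1/\<eta>) / (p x - q x)) powr P = F x" for x
        unfolding F_def \<Lambda>_def powr_def by (simp add: field_simps)
      obtain T0 where T0: "\<forall>t\<ge>T0. 2 * \<Lambda> / \<sigma> \<le> \<psi> t"
        using assms(14) unfolding filterlim_at_top eventually_at_top_linorder by blast
      define T where "T = max T0 2"
      have T: "1 < T" "\<forall>t\<ge>T. 2 * \<Lambda> / \<sigma> \<le> \<psi> t" unfolding T_def using T0 by auto
      define M where "M = exp (\<Lambda> / (\<psi> T / ln T))"
      have Fbd: "AE x in lebesgue_on \<Omega>. ennreal (F x) \<le> ennreal M + ennreal (infdist x K powr (-(\<sigma>/2)))"
        using good
      proof eventually_elim
        case (elim x)
        have "F x \<le> M + infdist x K powr (-(\<sigma>/2))"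
          unfolding F_def M_def
          by (rule F_bound) (use elim L assms(9,12,13) T in auto)
        then have "ennreal (F x) \<le> ennreal (M + infdist x K powr (-(\<sigma>/2)))" by (rule ennreal_leI)
        also have "\<dots> = ennreal M + ennreal (infdist x K powr (-(\<sigma>/2)))"
          by (rule ennreal_plus) (auto simp: M_def)
        finally show ?case .
      qed
      have Fint: "(\<integral>\<^sup>+ x. ennreal (F x) \<partial>lebesgue_on \<Omega>) < \<infinity>"
      proof -
        have "(\<integral>\<^sup>+ x. ennreal (F x) \<partial>lebesgue_on \<Omega>) \<le> (\<integral>\<^sup>+ x. ennreal M + ennreal (infdist x K powr (-(\<sigma>/2))) \<partial>lebesgue_on \<Omega>)"
          by (rule nn_integral_mono_AE[OF Fbd])
        also have "\<dots> = (\<integral>\<^sup>+ x. ennreal M \<partial>lebesgue_on \<Omega>) + (\<integral>\<^sup>+ x. ennreal (infdist x K powr (-(\<sigma>/2))) \<partial>lebesgue_on \<Omega>)"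
          by (rule nn_integral_add) auto
        also have "(\<integral>\<^sup>+ x. ennreal M \<partial>lebesgue_on \<Omega>) = ennreal M * emeasure lebesgue \<Omega>"
          by (simp add: nn_integral_const emeasure_restrict_space Osets)
        finally have I: "(\<integral>\<^sup>+ x. ennreal (F x) \<partial>lebesgue_on \<Omega>) \<le> ennreal M * emeasure lebesgue \<Omega> + (\<integral>\<^sup>+ x. ennreal (infdist x K powr (-(\<sigma>/2))) \<partial>lebesgue_on \<Omega>)" .
        have J: "(\<integral>\<^sup>+ x. ennreal (infdist x K powr (-(\<sigma>/2))) \<partial>lebesgue_on \<Omega>) < \<infinity>"
          by (rule dist_int[OF Osets Ofin assms(11)]) (use assms(8,9) in auto)
        have "ennreal M * emeasure lebesgue \<Omega> < \<infinity>" using Ofin by (simp add: ennreal_mult_less_top)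
        with J have "ennreal M * emeasure lebesgue \<Omega> + (\<integral>\<^sup>+ x. ennreal (infdist x K powr (-(\<sigma>/2))) \<partial>lebesgue_on \<Omega>) < \<infinity>"
          by simp
        with I show ?thesis by (rule le_less_trans)
      qed
      have lim: "(\<lambda>n. \<integral>\<^sup>+ x. ennreal (F x) * indicator (E n) x \<partial>lebesgue_on \<Omega>) \<longlonglongrightarrow> (\<integral>\<^sup>+ x. 0 \<partial>lebesgue_on \<Omega>)"
      proof (rule nn_integral_dominated_convergence[where w="\<lambda>x. ennreal (F x)"])
        show "AE x in lebesgue_on \<Omega>. (\<lambda>n. ennreal (F x) * indicator (E n) x) \<longlonglongrightarrow> 0"
          using conjunct2[OF hE]
        proof eventually_elim
          case (elim x)
          have "(\<lambda>n. ennreal (F x * indicator (E n) x)) \<longlonglongrightarrow> ennreal (F x * 0)"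
            by (intro tendsto_ennrealI tendsto_mult tendsto_const elim)
          moreover have "ennreal (F x * indicator (E n) x) = ennreal (F x) * indicator (E n) x" for n
            by (simp add: indicator_def)
          ultimately show ?case by simp
        qed
        show "AE x in lebesgue_on \<Omega>. ennreal (F x) * indicator (E j) x \<le> ennreal (F x)" for j
          by (simp add: indicator_def)
      qed (use Fint in auto)
      then have lim0: "(\<lambda>n. \<integral>\<^sup>+ x. ennreal (F x) * indicator (E n) x \<partial>lebesgue_on \<Omega>) \<longlonglongrightarrow> 0"
        by simp
      have "0 < ennreal (1 / (2 * \<mu> powr P))" using mu1 by simp
      from order_tendstoD(2)[OF lim0 this]
      have ev: "eventually (\<lambda>n. (\<integral>\<^sup>+ x. ennreal (F x) * indicator (E n) x \<partial>lebesgue_on \<Omega>) < ennreal (1 / (2 * \<mu> powr P))) sequentially" .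
      show "eventually (\<lambda>n. (SUP u\<in>{u\<in>Lvar p \<Omega>. vnorm p \<Omega> u \<le> 1}.
              vnorm q \<Omega> (\<lambda>x. u x * indicator (E n) x)) \<le> ennreal \<epsilon>) sequentially"
        using ev
      proof eventually_elim
        case (elim n)
        show ?case
        proof (rule SUP_least)
          fix u assume u: "u \<in> {u\<in>Lvar p \<Omega>. vnorm p \<Omega> u \<le> 1}"
          then have um[measurable]: "u \<in> borel_measurable (lebesgue_on \<Omega>)" and vn: "vnorm p \<Omega> u \<le> 1"
            by (auto simp: Lvar_def)
          have modp: "(\<integral>\<^sup>+ x. ennreal (\<bar>u x / 2\<bar> powr p x) \<partial>lebesgue_on \<Omega>) \<le> 1"
            by (rule modular_half[OF vn]) (use bnds in force)
          have "(\<integral>\<^sup>+ x. ennreal (\<bar>u x * indicator (E n) x / \<epsilon>\<bar> powr q x) \<partial>lebesgue_on \<Omega>)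
             \<le> (\<integral>\<^sup>+ x. ennreal (\<mu> powr P) * (ennreal (F x) * indicator (E n) x) + ennreal (\<mu> powr P * \<eta>) * ennreal (\<bar>u x / 2\<bar> powr p x) \<partial>lebesgue_on \<Omega>)"
          proof (rule nn_integral_mono_AE)
            show "AE x in lebesgue_on \<Omega>. ennreal (\<bar>u x * indicator (E n) x / \<epsilon>\<bar> powr q x)
               \<le> ennreal (\<mu> powr P) * (ennreal (F x) * indicator (E n) x) + ennreal (\<mu> powr P * \<eta>) * ennreal (\<bar>u x / 2\<bar> powr p x)"
              using good
            proof eventually_elim
              case (elim x)
              show ?case
              proof (cases "x \<in> E n")
                case False then show ?thesis by simp
              next
                case True
                have eq: "\<bar>u x * indicator (E n) x / \<epsilon>\<bar> = \<mu> * (\<bar>u x\<bar> / 2)"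
                  using True e unfolding \<mu>_def by (simp add: abs_divide)
                have core: "(\<mu> * (\<bar>u x\<bar> / 2)) powr q x \<le> \<mu> powr P * F x + \<mu> powr P * \<eta> * (\<bar>u x\<bar> / 2) powr p x"
                  using core_ineq[of "q x" "p x" P \<mu> \<eta> "\<bar>u x\<bar> / 2"] elim mu1 eta FH[of x] by auto
                have "ennreal (\<bar>u x * indicator (E n) x / \<epsilon>\<bar> powr q x) \<le> ennreal (\<mu> powr P * F x + \<mu> powr P * \<eta> * (\<bar>u x\<bar> / 2) powr p x)"
                  unfolding eq using core by (rule ennreal_leI)
                also have "\<dots> = ennreal (\<mu> powr P * F x) + ennreal (\<mu> powr P * \<eta> * (\<bar>u x\<bar> / 2) powr p x)"
                  by (rule ennreal_plus) (use eta F_def in auto)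
                also have "ennreal (\<mu> powr P * F x) = ennreal (\<mu> powr P) * ennreal (F x)"
                  by (rule ennreal_mult) (auto simp: F_def)
                also have "ennreal (\<mu> powr P * \<eta> * (\<bar>u x\<bar> / 2) powr p x) = ennreal (\<mu> powr P * \<eta>) * ennreal ((\<bar>u x\<bar> / 2) powr p x)"
                  by (rule ennreal_mult) (use eta in auto)
                also have "(\<bar>u x\<bar> / 2) = \<bar>u x / 2\<bar>" by (simp add: abs_divide)
                also have "ennreal (F x) = ennreal (F x) * indicator (E n) x" using True by simp
                finally show ?thesis .
              qed
            qed
          qed
          also have "\<dots> = ennreal (\<mu> powr P) * (\<integral>\<^sup>+ x. ennreal (F x) * indicator (E n) x \<partial>lebesgue_on \<Omega>)
                   + ennreal (\<mu> powr P * \<eta>) * (\<integral>\<^sup>+ x. ennreal (\<bar>u x / 2\<bar> powr p x) \<partial>lebesgue_on \<Omega>)"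
            by (simp add: nn_integral_add nn_integral_cmult)
          also have "\<dots> \<le> ennreal (\<mu> powr P) * ennreal (1 / (2 * \<mu> powr P)) + ennreal (\<mu> powr P * \<eta>) * 1"
            using elim modp by (intro add_mono mult_left_mono) auto
          also have "\<dots> = 1"
          proof -
            have a: "\<mu> powr P * (1 / (2 * \<mu> powr P)) = 1/2" using mu1 by simp
            have b: "\<mu> powr P * \<eta> = 1/2" unfolding \<eta>_def using mu1 by simp
            have c0: "ennreal (\<mu> powr P * (1 / (2 * \<mu> powr P))) = ennreal (\<mu> powr P) * ennreal (1 / (2 * \<mu> powr P))"
              by (rule ennreal_mult) (use muP in auto)
            have c: "ennreal (\<mu> powr P) * ennreal (1 / (2 * \<mu> powr P)) = ennreal (1/2)"
              using c0 unfolding a by (rule sym)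
            have d: "ennreal (1/2) + ennreal (1/2) = ennreal (1/2 + 1/2)"
              by (rule ennreal_plus[symmetric]) auto
            have "ennreal (\<mu> powr P) * ennreal (1 / (2 * \<mu> powr P)) + ennreal (\<mu> powr P * \<eta>) * 1
                = ennreal (1/2 + 1/2)"
              unfolding c b mult_1_right d by (rule refl)
            also have "\<dots> = 1" by simp
            finally show ?thesis .
          qed
          finally have modq: "(\<integral>\<^sup>+ x. ennreal (\<bar>u x * indicator (E n) x / \<epsilon>\<bar> powr q x) \<partial>lebesgue_on \<Omega>) \<le> 1" .
          show "vnorm q \<Omega> (\<lambda>x. u x * indicator (E n) x) \<le> ennreal \<epsilon>"
            unfolding vnorm_def by (rule INF_lower) (use e modq in auto)
        qed
      qed
    qed
  qed
qed

end
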